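(* Let $b_i>0$ ($i\ge0$), $a_i>0$ ($i\ge1$) and $c_i\le0$ ($i\ge0$) be real numbers. Put $\mu_0=1$, $\mu_i=\frac{b_0\cdots b_{i-1}}{a_1\cdots a_i}$ ($i\ge1$). Define $$\tilde q_n^{(k)}=\begin{cases}-c_n,&0\le k\le n-2,\\ a_n-c_n,&k=n-1,\end{cases}\qquad \widetilde F_i^{(i)}=1,\quad \widetilde F_n^{(i)}=\frac1{b_n}\sum_{k=i}^{n-1}\tilde q_n^{(k)}\widetilde F_k^{(i)}\ (n>i\ge0),$$ $$h_n=1-\sum_{0\le k\le n-1}\ \sum_{0\le j\le k}\widetilde F_k^{(j)}\frac{c_j}{b_j},\qquad n\ge0,$$ and $$\lambda_0=\inf\Big\{\sum_{k\ge0}\mu_k\big[b_k(f_{k+1}-f_k)^2-c_kf_k^2\big]:\ \sum_{k\ge0}\mu_kf_k^2=1,\ f\text{ finitely supported on }\{0,1,2,\dots\}\Big\}.$$ Let $$\tilde\delta=\sup_{n\ge0}\sum_{j=0}^n\mu_jh_j^2\sum_{k\ge n}\frac1{h_kh_{k+1}\mu_kb_k}.$$ Then $\tilde\delta\le\lambda_0^{-1}\le4\tilde\delta$ (with $1/0=\infty$). In particular, $\lambda_0>0$ if and only if $\tilde\delta<\infty$. *)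

theory Defs
  imports "HOL-Analysis.Analysis"
begin

definition mu :: "(nat \<Rightarrow> real) \<Rightarrow> (nat \<Rightarrow> real) \<Rightarrow> nat \<Rightarrow> real" where
  "mu a b i = (\<Prod>j<i. b j) / (\<Prod>j\<in>{1..i}. a j)"

text \<open>q~_n^(k), only used for k \<le> n-1 (value 0 elsewhere is irrelevant).\<close>
definition qt :: "(nat \<Rightarrow> real) \<Rightarrow> (nat \<Rightarrow> real) \<Rightarrow> nat \<Rightarrow> nat \<Rightarrow> real" where
  "qt a c n k = (if k + 2 \<le> n then - c n else if k + 1 = n then a n - c n else 0)"

text \<open>F~_n^(i) (written Ft a b c i n); F~_i^(i) = 1, recursion for n > i; 0 for n < i (unused).\<close>
function Ft :: "(nat \<Rightarrow> real) \<Rightarrow> (nat \<Rightarrow> real) \<Rightarrow> (nat \<Rightarrow> real) \<Rightarrow> nat \<Rightarrow> nat \<Rightarrow> real" where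
  "Ft a b c i n = (if n \<le> i then (if n = i then 1 else 0)
     else (1 / b n) * (\<Sum>k\<in>{i..<n}. qt a c n k * Ft a b c i k))"
  by auto
termination by (relation "Wellfounded.measure (\<lambda>(a, b, c, i, n). n)") auto

declare Ft.simps[simp del]

definition hh :: "(nat \<Rightarrow> real) \<Rightarrow> (nat \<Rightarrow> real) \<Rightarrow> (nat \<Rightarrow> real) \<Rightarrow> nat \<Rightarrow> real" where
  "hh a b c n = 1 - (\<Sum>k<n. \<Sum>j\<le>k. Ft a b c j k * c j / b j)"

definition lambda0 :: "(nat \<Rightarrow> real) \<Rightarrow> (nat \<Rightarrow> real) \<Rightarrow> (nat \<Rightarrow> real) \<Rightarrow> real" where
  "lambda0 a b c = Inf {(\<Sum>k. mu a b k * (b k * (f (Suc k) - f k)^2 - c k * (f k)^2)) | f.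
      finite {k. f k \<noteq> 0} \<and> (\<Sum>k. mu a b k * (f k)^2) = 1}"

definition delta :: "(nat \<Rightarrow> real) \<Rightarrow> (nat \<Rightarrow> real) \<Rightarrow> (nat \<Rightarrow> real) \<Rightarrow> ennreal" where
  "delta a b c = (SUP n. ennreal (\<Sum>j\<le>n. mu a b j * (hh a b c j)^2) *
      (\<Sum>k. ennreal (1 / (hh a b c (k + n) * hh a b c (Suc (k + n)) * mu a b (k + n) * b (k + n)))))"

end

theory Submission
  imports Defs
begin


lemma sum_tri_swap:
  fixes F :: "nat \<Rightarrow> nat \<Rightarrow> real"
  shows "(\<Sum>k<N. \<Sum>m\<in>{k..<N}. F k m) = (\<Sum>m<N. \<Sum>k\<le>m. F k m)"
proof (induction N)
  case 0 then show ?case by simp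
next
  case (Suc N)
  have "(\<Sum>k<Suc N. \<Sum>m\<in>{k..<Suc N}. F k m) = (\<Sum>k<N. \<Sum>m\<in>{k..<Suc N}. F k m) + F N N"
    by simp
  also have "(\<Sum>k<N. \<Sum>m\<in>{k..<Suc N}. F k m) = (\<Sum>k<N. (\<Sum>m\<in>{k..<N}. F k m) + F k N)"
    by (intro sum.cong) auto
  also have "\<dots> = (\<Sum>m<N. \<Sum>k\<le>m. F k m) + (\<Sum>k<N. F k N)"
    by (simp add: sum.distrib Suc.IH)
  finally show ?case by (simp add: lessThan_Suc_atMost[symmetric])
qed

lemma weighted_CS:
  fixes x p :: "nat \<Rightarrow> real"
  assumes "\<And>i. i \<in> A \<Longrightarrow> p i > 0"
  shows "(\<Sum>i\<in>A. x i)^2 \<le> (\<Sum>i\<in>A. (x i)^2 / p i) * (\<Sum>i\<in>A. p i)"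
proof -
  have "(\<Sum>i\<in>A. x i) = (\<Sum>i\<in>A. (x i / sqrt (p i)) * sqrt (p i))"
  proof (intro sum.cong refl)
    fix i assume "i \<in> A"
    then have "sqrt (p i) > 0" using assms by simp
    thus "x i = x i / sqrt (p i) * sqrt (p i)" by simp
  qed
  hence "(\<Sum>i\<in>A. x i)^2 \<le> (\<Sum>i\<in>A. (x i / sqrt (p i))^2) * (\<Sum>i\<in>A. (sqrt (p i))^2)"
    using Cauchy_Schwarz_ineq_sum by metis
  also have "\<dots> = (\<Sum>i\<in>A. (x i)^2 / p i) * (\<Sum>i\<in>A. p i)"
    using assms by (intro arg_cong2[where f="(*)"] sum.cong) (auto simp: power_divide less_imp_le)
  finally show ?thesis .
qed

lemma sqrt_key:
  fixes x y :: real
  assumes "0 \<le> y" "y \<le> x" "0 < x"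
  shows "(x - y) / sqrt x \<le> 2 * (sqrt x - sqrt y)"
proof -
  define s t where "s = sqrt x" and "t = sqrt y"
  have s: "s > 0" "s^2 = x" using assms by (auto simp: s_def)
  have t: "t \<ge> 0" "t^2 = y" using assms by (auto simp: t_def)
  have "(x - y) = (s^2 - t^2)" using s t by simp
  also have "\<dots> \<le> 2 * (s - t) * s"
  proof -
    have e: "2 * (s - t) * s - (s^2 - t^2) = (s - t)^2" by (simp add: power2_eq_square algebra_simps)
    have "0 \<le> (s - t)^2" by simp
    thus ?thesis using e by linarith
  qed
  finally have "x - y \<le> 2 * (s - t) * s" .
  then show ?thesis using s by (simp add: s_def t_def divide_le_eq)
qed

lemma hardy:
  fixes \<nu> w g :: "nat \<Rightarrow> real" and B :: real and N :: nat
  assumes \<nu>pos: "\<And>k. \<nu> k > 0" and wpos: "\<And>k. w k > 0" and summ: "summable (\<lambda>k. 1 / w k)"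
    and VW: "\<And>n. (\<Sum>j\<le>n. \<nu> j) * (\<Sum>i. 1 / w (i + n)) \<le> B"
    and gN: "g N = 0"
  shows "(\<Sum>k<N. \<nu> k * (g k)^2) \<le> 4 * B * (\<Sum>k<N. w k * (g (Suc k) - g k)^2)"
proof -
  define W where "W m = (\<Sum>i. 1 / w (i + m))" for m
  define V where "V k = (\<Sum>j\<le>k. \<nu> j)" for k
  define d where "d m = g (Suc m) - g m" for m
  have sW: "summable (\<lambda>i. 1 / w (i + m))" for m
    using summable_ignore_initial_segment[OF summ, of m] by simp
  have Wpos: "W m > 0" for m unfolding W_def
    by (rule suminf_pos[OF sW]) (simp add: wpos)
  have Wstep: "W m - W (Suc m) = 1 / w m" for m
    using suminf_split_head[OF sW[of m]] by (simp add: W_def)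
  have Vpos: "V k > 0" for k unfolding V_def by (intro sum_pos) (auto simp: \<nu>pos)
  have VWB: "V k * W k \<le> B" for k using VW[of k] by (simp add: V_def W_def)
  have Bpos: "B > 0" using VWB[of 0] Vpos[of 0] Wpos[of 0]
    by (meson mult_pos_pos order_less_le_trans)
  have T1: "(\<Sum>m\<in>{k..<N}. 1 / (w m * sqrt (W m))) \<le> 2 * sqrt (W k)" for k
  proof (cases "k \<le> N")
    case True
    have "(\<Sum>m\<in>{k..<N}. 1 / (w m * sqrt (W m))) \<le> (\<Sum>m\<in>{k..<N}. 2 * (sqrt (W m) - sqrt (W (Suc m))))"
    proof (intro sum_mono)
      fix m
      have "1 / (w m * sqrt (W m)) = (W m - W (Suc m)) / sqrt (W m)" using Wstep[of m] by simp
      also have "\<dots> \<le> 2 * (sqrt (W m) - sqrt (W (Suc m)))"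
      proof (intro sqrt_key)
        have "0 < 1 / w m" using wpos[of m] by simp
        thus "W (Suc m) \<le> W m" using Wstep[of m] by linarith
      qed (use Wpos[of m] Wpos[of "Suc m"] in \<open>auto simp: less_imp_le\<close>)
      finally show "1 / (w m * sqrt (W m)) \<le> 2 * (sqrt (W m) - sqrt (W (Suc m)))" .
    qed
    also have "\<dots> = 2 * (\<Sum>m\<in>{k..<N}. sqrt (W m) - sqrt (W (Suc m)))"
      by (rule sum_distrib_left[symmetric])
    also have "\<dots> = 2 * (sqrt (W k) - sqrt (W N))"
      using sum_Suc_diff'[OF True, of "\<lambda>m. - sqrt (W m)"] by simp
    also have "\<dots> \<le> 2 * sqrt (W k)" using Wpos[of N] by (simp add: less_imp_le)
    finally show ?thesis .
  next
    case False then show ?thesis using Wpos[of k] by (simp add: less_imp_le)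
  qed
  have T2: "(\<Sum>k\<le>m. \<nu> k / sqrt (V k)) \<le> 2 * sqrt (V m)" for m
  proof (induction m)
    case 0
    have "\<nu> 0 / sqrt (\<nu> 0) = sqrt (\<nu> 0)" using \<nu>pos[of 0]
      by (metis less_eq_real_def real_div_sqrt)
    then show ?case using \<nu>pos[of 0] by (simp add: V_def)
  next
    case (Suc m)
    have VS: "V (Suc m) = V m + \<nu> (Suc m)" by (simp add: V_def)
    have "\<nu> (Suc m) / sqrt (V (Suc m)) \<le> 2 * (sqrt (V (Suc m)) - sqrt (V m))"
      using sqrt_key[of "V m" "V (Suc m)"] VS Vpos[of m] \<nu>pos[of "Suc m"] by simp
    then show ?case using Suc.IH by simp
  qed
  have sqW: "sqrt (W k) \<le> sqrt B / sqrt (V k)" for k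
  proof -
    have "W k \<le> B / V k" using VWB[of k] Vpos[of k] by (simp add: le_divide_eq mult.commute)
    hence "sqrt (W k) \<le> sqrt (B / V k)" by simp
    thus ?thesis by (simp add: real_sqrt_divide)
  qed
  have sqV: "sqrt (V k) \<le> sqrt B / sqrt (W k)" for k
  proof -
    have "V k \<le> B / W k" using VWB[of k] Wpos[of k] by (simp add: le_divide_eq)
    hence "sqrt (V k) \<le> sqrt (B / W k)" by simp
    thus ?thesis by (simp add: real_sqrt_divide)
  qed
  have T3: "(\<Sum>k\<le>m. \<nu> k * sqrt (W k)) \<le> 2 * B / sqrt (W m)" for m
  proof -
    have "(\<Sum>k\<le>m. \<nu> k * sqrt (W k)) \<le> (\<Sum>k\<le>m. sqrt B * (\<nu> k / sqrt (V k)))"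
    proof (intro sum_mono)
      fix k
      have "\<nu> k * sqrt (W k) \<le> \<nu> k * (sqrt B / sqrt (V k))"
        using sqW[of k] \<nu>pos[of k] by (intro mult_left_mono) auto
      thus "\<nu> k * sqrt (W k) \<le> sqrt B * (\<nu> k / sqrt (V k))" by (simp add: mult.commute)
    qed
    also have "\<dots> = sqrt B * (\<Sum>k\<le>m. \<nu> k / sqrt (V k))" by (simp add: sum_distrib_left)
    also have "\<dots> \<le> sqrt B * (2 * sqrt (V m))" using T2[of m] Bpos by (intro mult_left_mono) auto
    also have "\<dots> \<le> sqrt B * (2 * (sqrt B / sqrt (W m)))" using sqV[of m] Bpos
      by (intro mult_left_mono) auto
    also have "\<dots> = 2 * B / sqrt (W m)" using Bpos by simp
    finally show ?thesis .
  qed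
  have CS: "\<nu> k * (g k)^2 \<le> 2 * (\<nu> k * sqrt (W k)) * (\<Sum>m\<in>{k..<N}. (d m)^2 * w m * sqrt (W m))"
    if "k < N" for k
  proof -
    have gk: "g k = - (\<Sum>m\<in>{k..<N}. d m)"
      using sum_Suc_diff'[of k N g] that gN by (simp add: d_def)
    have "(g k)^2 = (\<Sum>m\<in>{k..<N}. d m)^2" by (simp add: gk)
    also have "\<dots> \<le> (\<Sum>m\<in>{k..<N}. (d m)^2 / (1 / (w m * sqrt (W m)))) * (\<Sum>m\<in>{k..<N}. 1 / (w m * sqrt (W m)))"
      using Wpos wpos by (intro weighted_CS) auto
    also have "(\<Sum>m\<in>{k..<N}. (d m)^2 / (1 / (w m * sqrt (W m)))) = (\<Sum>m\<in>{k..<N}. (d m)^2 * w m * sqrt (W m))"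
      by (simp add: mult.assoc)
    also have "(\<Sum>m\<in>{k..<N}. (d m)^2 * w m * sqrt (W m)) * (\<Sum>m\<in>{k..<N}. 1 / (w m * sqrt (W m)))
        \<le> (\<Sum>m\<in>{k..<N}. (d m)^2 * w m * sqrt (W m)) * (2 * sqrt (W k))"
      using T1[of k] Wpos wpos by (intro mult_left_mono sum_nonneg) (auto simp: less_imp_le)
    finally have "(g k)^2 \<le> (\<Sum>m\<in>{k..<N}. (d m)^2 * w m * sqrt (W m)) * (2 * sqrt (W k))" .
    hence "\<nu> k * (g k)^2 \<le> \<nu> k * ((\<Sum>m\<in>{k..<N}. (d m)^2 * w m * sqrt (W m)) * (2 * sqrt (W k)))"
      using \<nu>pos[of k] by (intro mult_left_mono) auto
    thus ?thesis by (simp add: algebra_simps)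
  qed
  have "(\<Sum>k<N. \<nu> k * (g k)^2) \<le> (\<Sum>k<N. 2 * (\<nu> k * sqrt (W k)) * (\<Sum>m\<in>{k..<N}. (d m)^2 * w m * sqrt (W m)))"
    using CS by (intro sum_mono) auto
  also have "\<dots> = 2 * (\<Sum>k<N. \<Sum>m\<in>{k..<N}. (\<nu> k * sqrt (W k)) * ((d m)^2 * w m * sqrt (W m)))"
    by (simp add: sum_distrib_left mult.assoc)
  also have "\<dots> = 2 * (\<Sum>m<N. \<Sum>k\<le>m. (\<nu> k * sqrt (W k)) * ((d m)^2 * w m * sqrt (W m)))"
    by (simp add: sum_tri_swap)
  also have "\<dots> = 2 * (\<Sum>m<N. ((d m)^2 * w m * sqrt (W m)) * (\<Sum>k\<le>m. \<nu> k * sqrt (W k)))"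
    by (simp add: sum_distrib_left sum_distrib_right mult.commute)
  also have "\<dots> \<le> 2 * (\<Sum>m<N. ((d m)^2 * w m * sqrt (W m)) * (2 * B / sqrt (W m)))"
    using T3 Wpos wpos by (intro mult_left_mono sum_mono) (auto simp: less_imp_le)
  also have "\<dots> = 4 * B * (\<Sum>k<N. w k * (g (Suc k) - g k)^2)"
  proof -
    have "((d m)^2 * w m * sqrt (W m)) * (2 * B / sqrt (W m)) = 2 * B * ((d m)^2 * w m)" for m
      using Wpos[of m] by (simp add: field_simps)
    hence "2 * (\<Sum>m<N. ((d m)^2 * w m * sqrt (W m)) * (2 * B / sqrt (W m))) = 2 * (\<Sum>m<N. 2 * B * ((d m)^2 * w m))"
      by simp
    also have "\<dots> = 4 * B * (\<Sum>k<N. w k * (g (Suc k) - g k)^2)"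
      by (simp add: sum_distrib_left d_def algebra_simps)
    finally show ?thesis .
  qed
  finally show ?thesis .
qed



locale bdp =
  fixes a b c :: "nat \<Rightarrow> real"
  assumes bpos: "\<And>i. b i > 0" and apos: "\<And>i. i \<ge> 1 \<Longrightarrow> a i > 0" and cneg: "\<And>i. c i \<le> 0"
begin

lemma mu_0: "mu a b 0 = 1" by (simp add: mu_def)

lemma mu_Suc: "mu a b (Suc n) = mu a b n * b n / a (Suc n)"
  by (simp add: mu_def prod.lessThan_Suc prod.nat_ivl_Suc' field_simps)

lemma mu_pos: "mu a b n > 0"
  unfolding mu_def using bpos apos by (intro divide_pos_pos prod_pos) auto

lemma mu_bal: "mu a b (Suc n) * a (Suc n) = mu a b n * b n"
  using apos[of "Suc n"] by (simp add: mu_Suc)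

definition e :: "nat \<Rightarrow> real" where "e n = (\<Sum>j\<le>n. Ft a b c j n * c j / b j)"

lemma h_0: "hh a b c 0 = 1" by (simp add: hh_def)

lemma h_Suc: "hh a b c (Suc n) = hh a b c n - e n"
  by (simp add: hh_def e_def)

lemma Ft_same: "Ft a b c j j = 1" by (simp add: Ft.simps)

lemma Ft_rec: assumes "j \<le> m"
  shows "b (Suc m) * Ft a b c j (Suc m) = a (Suc m) * Ft a b c j m - c (Suc m) * (\<Sum>k\<in>{j..<Suc m}. Ft a b c j k)"
proof -
  have "Ft a b c j (Suc m) = (1 / b (Suc m)) * (\<Sum>k\<in>{j..<Suc m}. qt a c (Suc m) k * Ft a b c j k)"
    using assms by (subst Ft.simps) simp
  hence "b (Suc m) * Ft a b c j (Suc m) = (\<Sum>k\<in>{j..<Suc m}. qt a c (Suc m) k * Ft a b c j k)"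
    using bpos[of "Suc m"] by simp
  also have "\<dots> = (\<Sum>k\<in>{j..<m}. qt a c (Suc m) k * Ft a b c j k) + qt a c (Suc m) m * Ft a b c j m"
    using assms by simp
  also have "(\<Sum>k\<in>{j..<m}. qt a c (Suc m) k * Ft a b c j k) = (\<Sum>k\<in>{j..<m}. - c (Suc m) * Ft a b c j k)"
    by (intro sum.cong) (auto simp: qt_def)
  also have "(\<Sum>k\<in>{j..<m}. - c (Suc m) * Ft a b c j k) = - c (Suc m) * (\<Sum>k\<in>{j..<m}. Ft a b c j k)"
    by (simp add: sum_distrib_left)
  also have "qt a c (Suc m) m = a (Suc m) - c (Suc m)" by (simp add: qt_def)
  also have "(\<Sum>k\<in>{j..<Suc m}. Ft a b c j k) = (\<Sum>k\<in>{j..<m}. Ft a b c j k) + Ft a b c j m"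
    using assms by simp
  ultimately show ?thesis by (simp add: algebra_simps)
qed

lemma e_0: "b 0 * e 0 = c 0"
  using bpos[of 0] by (simp add: e_def Ft_same)

lemma e_Suc: "b (Suc m) * e (Suc m) = a (Suc m) * e m + c (Suc m) * hh a b c (Suc m)"
proof -
  let ?n = "Suc m"
  have "b ?n * e ?n = (\<Sum>j\<le>m. b ?n * (Ft a b c j ?n * c j / b j)) + b ?n * (c ?n / b ?n)"
    by (simp add: e_def Ft_same sum_distrib_left distrib_left)
  also have "\<dots> = (\<Sum>j\<le>m. b ?n * Ft a b c j ?n * c j / b j) + c ?n"
    using bpos[of ?n] by (simp add: mult.assoc)
  also have "(\<Sum>j\<le>m. b ?n * Ft a b c j ?n * c j / b j)
     = (\<Sum>j\<le>m. (a ?n * Ft a b c j m - c ?n * (\<Sum>k\<in>{j..<?n}. Ft a b c j k)) * c j / b j)"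
    by (intro sum.cong refl) (simp add: Ft_rec)
  also have "\<dots> = (\<Sum>j\<le>m. a ?n * (Ft a b c j m * c j / b j) - c ?n * (\<Sum>k\<in>{j..<?n}. Ft a b c j k * c j / b j))"
  proof (intro sum.cong refl)
    fix j
    have "(\<Sum>k\<in>{j..<?n}. Ft a b c j k * c j / b j) = (\<Sum>k\<in>{j..<?n}. Ft a b c j k) * c j / b j"
      unfolding sum_distrib_right sum_divide_distrib by (rule refl)
    thus "(a ?n * Ft a b c j m - c ?n * (\<Sum>k\<in>{j..<?n}. Ft a b c j k)) * c j / b j
      = a ?n * (Ft a b c j m * c j / b j) - c ?n * (\<Sum>k\<in>{j..<?n}. Ft a b c j k * c j / b j)"
      by (simp add: algebra_simps diff_divide_distrib)
  qed
  also have "\<dots> = a ?n * e m - c ?n * (\<Sum>j<?n. \<Sum>k\<in>{j..<?n}. Ft a b c j k * c j / b j)"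
    by (simp only: sum_subtractf sum_distrib_left[symmetric] e_def lessThan_Suc_atMost)
  also have "(\<Sum>j<?n. \<Sum>k\<in>{j..<?n}. Ft a b c j k * c j / b j) = (\<Sum>k<?n. \<Sum>j\<le>k. Ft a b c j k * c j / b j)"
    by (rule sum_tri_swap)
  also have "\<dots> = 1 - hh a b c ?n" by (simp add: hh_def)
  finally show ?thesis by (simp add: algebra_simps)
qed

lemma key: "mu a b n * b n * e n = (\<Sum>j\<le>n. mu a b j * c j * hh a b c j)"
proof (induction n)
  case 0 then show ?case using e_0 by (simp add: mu_0 h_0)
next
  case (Suc m)
  have "mu a b (Suc m) * b (Suc m) * e (Suc m) = mu a b (Suc m) * (a (Suc m) * e m + c (Suc m) * hh a b c (Suc m))"
    by (simp add: e_Suc mult.assoc)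
  also have "\<dots> = mu a b m * b m * e m + mu a b (Suc m) * c (Suc m) * hh a b c (Suc m)"
    using mu_bal[of m] by (simp add: algebra_simps)
  finally show ?case using Suc.IH by simp
qed

lemma h_ge1: "hh a b c n \<ge> 1"
proof (induction n rule: less_induct)
  case (less n)
  show ?case
  proof (cases n)
    case 0 then show ?thesis by (simp add: h_0)
  next
    case (Suc m)
    have "(\<Sum>j\<le>m. mu a b j * c j * hh a b c j) \<le> 0"
    proof (intro sum_nonpos)
      fix j assume "j \<in> {..m}"
      hence "hh a b c j \<ge> 1" using less Suc by auto
      thus "mu a b j * c j * hh a b c j \<le> 0"
        using mu_pos[of j] cneg[of j] by (simp add: mult_nonneg_nonpos mult_nonpos_nonneg)
    qed
    hence "mu a b m * b m * e m \<le> 0" by (simp add: key)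
    hence "e m \<le> 0" using mu_pos[of m] bpos[of m]
      by (metis mult_pos_pos not_le zero_less_mult_iff)
    moreover have "hh a b c m \<ge> 1" using less Suc by auto
    ultimately show ?thesis by (simp add: Suc h_Suc)
  qed
qed

lemma h_pos: "hh a b c n > 0" using h_ge1[of n] by simp

definition w :: "nat \<Rightarrow> real" where
  "w k = hh a b c k * hh a b c (Suc k) * mu a b k * b k"

lemma w_pos: "w k > 0" unfolding w_def using h_pos mu_pos bpos by simp

lemma step_alg:
  fixes h h' f f' :: real assumes "h > 0" "h' > 0"
  shows "(f' - f)^2 = h * h' * (f' / h' - f / h)^2 + (h' - h) * (f'^2 / h' - f^2 / h)"
  using assms by (simp add: field_simps power2_eq_square)

lemma ground:
  fixes f :: "nat \<Rightarrow> real"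
  shows "(\<Sum>k<N. mu a b k * (b k * (f (Suc k) - f k)^2 - c k * (f k)^2))
    = (\<Sum>k<N. w k * (f (Suc k) / hh a b c (Suc k) - f k / hh a b c k)^2)
      + (\<Sum>j<N. - (mu a b j * c j * hh a b c j)) * (f N)^2 / hh a b c N"
proof (induction N)
  case 0 then show ?case by simp
next
  case (Suc N)
  let ?h = "hh a b c"
  have D: "mu a b N * b N * (?h (Suc N) - ?h N) = (\<Sum>j<Suc N. - (mu a b j * c j * ?h j))"
    using key[of N] by (simp add: h_Suc sum_negf lessThan_Suc_atMost)
  have st: "mu a b N * b N * (f (Suc N) - f N)^2 = w N * (f (Suc N) / ?h (Suc N) - f N / ?h N)^2
      + mu a b N * b N * (?h (Suc N) - ?h N) * ((f (Suc N))^2 / ?h (Suc N) - (f N)^2 / ?h N)"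
  proof -
    define G where "G = (f (Suc N) / ?h (Suc N) - f N / ?h N)^2"
    define E where "E = (f (Suc N))^2 / ?h (Suc N) - (f N)^2 / ?h N"
    have s1: "(f (Suc N) - f N)^2 = ?h N * ?h (Suc N) * G + (?h (Suc N) - ?h N) * E"
      unfolding G_def E_def by (rule step_alg[OF h_pos[of N] h_pos[of "Suc N"]])
    show ?thesis unfolding G_def[symmetric] E_def[symmetric] s1 w_def by (simp add: algebra_simps)
  qed
  have hN: "(f N)^2 / ?h N * ?h N = (f N)^2" using h_pos[of N] by simp
  define X where "X = mu a b N * b N * (?h (Suc N) - ?h N)"
  have SN: "(\<Sum>j<N. - (mu a b j * c j * ?h j)) = X + mu a b N * c N * ?h N"
    using D by (simp add: X_def)
  have e1: "(\<Sum>j<N. - (mu a b j * c j * ?h j)) * (f N)^2 / ?h N = X * ((f N)^2 / ?h N) + mu a b N * c N * (f N)^2"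
    unfolding SN using h_pos[of N] by (simp add: field_simps)
  have e2: "X * ((f (Suc N))^2 / ?h (Suc N) - (f N)^2 / ?h N) = X * ((f (Suc N))^2 / ?h (Suc N)) - X * ((f N)^2 / ?h N)"
    by (simp add: right_diff_distrib)
  have e3: "(\<Sum>j<Suc N. - (mu a b j * c j * ?h j)) * (f (Suc N))^2 / ?h (Suc N) = X * ((f (Suc N))^2 / ?h (Suc N))"
    using D by (simp add: X_def)
  have e4: "mu a b N * (b N * (f (Suc N) - f N)^2 - c N * (f N)^2) = mu a b N * b N * (f (Suc N) - f N)^2 - mu a b N * c N * (f N)^2"
    by (simp add: algebra_simps)
  show ?case
    unfolding e3 unfolding sum.lessThan_Suc Suc.IH e4
    using st e1 e2 unfolding X_def[symmetric] by linarith
qed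

end


context bdp begin

definition E :: "(nat \<Rightarrow> real) \<Rightarrow> real" where
  "E f = (\<Sum>k. mu a b k * (b k * (f (Suc k) - f k)^2 - c k * (f k)^2))"
definition Nm :: "(nat \<Rightarrow> real) \<Rightarrow> real" where
  "Nm f = (\<Sum>k. mu a b k * (f k)^2)"
definition LS :: "real set" where
  "LS = {(\<Sum>k. mu a b k * (b k * (f (Suc k) - f k)^2 - c k * (f k)^2)) | f.
      finite {k. f k \<noteq> 0} \<and> (\<Sum>k. mu a b k * (f k)^2) = 1}"

lemma lam_def: "lambda0 a b c = Inf LS" by (simp add: lambda0_def LS_def)

lemma LS_iff: "x \<in> LS \<longleftrightarrow> (\<exists>f. x = E f \<and> finite {k. f k \<noteq> 0} \<and> Nm f = 1)"
  by (simp add: LS_def E_def Nm_def)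

lemma E_fin: assumes "\<And>k. k \<ge> N \<Longrightarrow> f k = 0"
  shows "E f = (\<Sum>k<N. w k * (f (Suc k) / hh a b c (Suc k) - f k / hh a b c k)^2)"
proof -
  have "E f = (\<Sum>k<N. mu a b k * (b k * (f (Suc k) - f k)^2 - c k * (f k)^2))"
    unfolding E_def by (rule suminf_finite) (auto simp: assms)
  also have "\<dots> = (\<Sum>k<N. w k * (f (Suc k) / hh a b c (Suc k) - f k / hh a b c k)^2)"
    using ground[where N=N and f=f] assms[of N] by simp
  finally show ?thesis .
qed

lemma Nm_fin: assumes "\<And>k. k \<ge> N \<Longrightarrow> f k = 0"
  shows "Nm f = (\<Sum>k<N. mu a b k * (f k)^2)"
  unfolding Nm_def by (rule suminf_finite) (auto simp: assms)

lemma fin_bound: fixes f :: "nat \<Rightarrow> real" assumes "finite {k. f k \<noteq> (0::real)}"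
  obtains N where "\<And>k. k \<ge> N \<Longrightarrow> f k = 0"
proof -
  obtain N where "{k. f k \<noteq> 0} \<subseteq> {..<N}" using finite_nat_bounded[OF assms] by blast
  then have "\<And>k. k \<ge> N \<Longrightarrow> f k = 0" by auto
  then show ?thesis using that by blast
qed

lemma LS_nonneg: "x \<in> LS \<Longrightarrow> x \<ge> 0"
proof -
  assume "x \<in> LS"
  then obtain f where f: "x = E f" "finite {k. f k \<noteq> 0}" by (auto simp: LS_iff)
  obtain N where N: "\<And>k. k \<ge> N \<Longrightarrow> f k = 0" using fin_bound[OF f(2)] by blast
  have "E f = (\<Sum>k<N. w k * (f (Suc k) / hh a b c (Suc k) - f k / hh a b c k)^2)"
    by (rule E_fin) (rule N)
  also have "\<dots> \<ge> 0" using w_pos by (intro sum_nonneg) (simp add: less_imp_le)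
  finally show "x \<ge> 0" using f(1) by simp
qed

lemma LS_ne: "LS \<noteq> {}"
proof -
  let ?f = "\<lambda>k::nat. if k = 0 then 1 else (0::real)"
  have "Nm ?f = 1" using Nm_fin[of 1 ?f] by (simp add: mu_0)
  moreover have "finite {k. ?f k \<noteq> 0}" by simp
  ultimately have "E ?f \<in> LS" by (auto simp: LS_iff)
  thus ?thesis by blast
qed

lemma LS_bdd: "bdd_below LS" using LS_nonneg by (intro bdd_belowI) auto

lemma lam_nonneg: "lambda0 a b c \<ge> 0"
  unfolding lam_def using LS_ne LS_nonneg by (intro cInf_greatest) auto

lemma lam_le:
  fixes g :: "nat \<Rightarrow> real"
  assumes gN: "\<And>k. k \<ge> N \<Longrightarrow> g k = 0"
    and Zdef: "Z = (\<Sum>k<N. mu a b k * (hh a b c k)^2 * (g k)^2)" and Zpos: "Z > 0"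
  shows "lambda0 a b c * Z \<le> (\<Sum>k<N. w k * (g (Suc k) - g k)^2)"
proof -
  define f where "f k = hh a b c k * g k / sqrt Z" for k
  have fN: "\<And>k. k \<ge> N \<Longrightarrow> f k = 0" using gN by (simp add: f_def)
  have fh: "f k / hh a b c k = g k / sqrt Z" for k using h_pos[of k] by (simp add: f_def)
  have "E f = (\<Sum>k<N. w k * (g (Suc k) / sqrt Z - g k / sqrt Z)^2)"
    using E_fin[of N f] fN unfolding fh by simp
  also have "\<dots> = (\<Sum>k<N. w k * (g (Suc k) - g k)^2) / Z"
    using Zpos by (simp add: sum_divide_distrib diff_divide_distrib[symmetric] power_divide)
  finally have Ef: "E f = (\<Sum>k<N. w k * (g (Suc k) - g k)^2) / Z" .
  have "Nm f = (\<Sum>k<N. mu a b k * (hh a b c k)^2 * (g k)^2) / Z"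
    using Nm_fin[of N f] fN Zpos
    by (simp add: sum_divide_distrib f_def power_divide power_mult_distrib mult.assoc)
  hence "Nm f = 1" using Zpos Zdef by simp
  moreover have "finite {k. f k \<noteq> 0}"
    by (rule finite_subset[of _ "{..<N}"]) (use fN not_le in auto)
  ultimately have "E f \<in> LS" by (auto simp: LS_iff)
  hence "lambda0 a b c \<le> E f" unfolding lam_def using LS_bdd by (rule cInf_lower)
  hence "lambda0 a b c * Z \<le> E f * Z" using Zpos by (simp add: mult_right_mono)
  thus ?thesis using Ef Zpos by simp
qed

end

context bdp begin

definition V :: "nat \<Rightarrow> real" where "V n = (\<Sum>j\<le>n. mu a b j * (hh a b c j)^2)"

lemma V_pos: "V n > 0" unfolding V_def
proof (intro sum_pos)
  fix i show "0 < mu a b i * (hh a b c i)^2" using mu_pos[of i] h_pos[of i] by simp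
qed auto

lemma delta_alt: "delta a b c = (SUP n. ennreal (V n) * (\<Sum>k. ennreal (1 / w (k + n))))"
  by (simp add: delta_def V_def w_def)

lemma partial_bound:
  assumes lp: "lambda0 a b c > 0"
  shows "V n * (\<Sum>k<M. 1 / w (k + n)) \<le> 1 / lambda0 a b c"
proof (cases "M = 0")
  case True then show ?thesis using lp by simp
next
  case False
  let ?L = "lambda0 a b c"
  define P where "P = (\<Sum>m\<in>{n..<n+M}. 1 / w m)"
  have PP: "(\<Sum>k<M. 1 / w (k + n)) = P"
    unfolding P_def using sum.shift_bounds_nat_ivl[of "\<lambda>m. 1 / w m" 0 n M]
    by (simp add: atLeast0LessThan add.commute)
  have Ppos: "P > 0" unfolding P_def using False w_pos by (intro sum_pos) auto
  define g where "g k = (\<Sum>m\<in>{max k n..<n+M}. 1 / w m)" for k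
  have gN: "g k = 0" if "k \<ge> n + M" for k using that by (simp add: g_def)
  have dg: "g (Suc k) - g k = (if n \<le> k \<and> k < n + M then - 1 / w k else 0)" for k
  proof (cases "k < n")
    case True
    then have "max (Suc k) n = n" "max k n = n" by auto
    then show ?thesis using True by (simp add: g_def)
  next
    case False
    then have m: "max (Suc k) n = Suc k" "max k n = k" by auto
    show ?thesis
    proof (cases "k < n + M")
      case True
      have "{k..<n+M} = insert k {Suc k..<n+M}" using True by auto
      then have "g k = 1 / w k + g (Suc k)" unfolding g_def m by simp
      then show ?thesis using True False by simp
    next
      case False2: False
      then show ?thesis using False by (simp add: g_def m)
    qed
  qed
  have energy: "(\<Sum>k<n+M. w k * (g (Suc k) - g k)^2) = P"
  proof -
    have "(\<Sum>k<n+M. w k * (g (Suc k) - g k)^2) = (\<Sum>k<n+M. if n \<le> k then 1 / w k else 0)"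
    proof (intro sum.cong refl)
      fix k assume "k \<in> {..<n+M}"
      then show "w k * (g (Suc k) - g k)^2 = (if n \<le> k then 1 / w k else 0)"
        using w_pos[of k] unfolding dg by (simp add: power2_eq_square)
    qed
    also have "\<dots> = (\<Sum>k\<in>{x\<in>{..<n+M}. n \<le> x}. 1 / w k)"
      by (rule sum.inter_filter[symmetric]) simp
    also have "{x\<in>{..<n+M}. n \<le> x} = {n..<n+M}" by auto
    finally show ?thesis unfolding P_def .
  qed
  define Z where "Z = (\<Sum>k<n+M. mu a b k * (hh a b c k)^2 * (g k)^2)"
  have gle: "g k = P" if "k \<le> n" for k using that by (simp add: g_def P_def max_def)
  have "V n * P^2 = (\<Sum>k\<le>n. mu a b k * (hh a b c k)^2 * (g k)^2)"
    unfolding V_def sum_distrib_right using gle by (intro sum.cong) auto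
  also have "\<dots> \<le> Z" unfolding Z_def using False mu_pos
    by (intro sum_mono2) (auto intro!: mult_nonneg_nonneg simp: less_imp_le)
  finally have VZ: "V n * P^2 \<le> Z" .
  have Zpos: "Z > 0" using VZ V_pos[of n] Ppos by (smt (verit) mult_pos_pos zero_less_power)
  have "?L * Z \<le> P" using lam_le[OF gN Z_def Zpos] energy by simp
  moreover have "?L * (V n * P^2) \<le> ?L * Z" using VZ lp by (simp add: mult_left_mono)
  ultimately have "?L * (V n * P) * P \<le> 1 * P" by (simp add: power2_eq_square mult.assoc)
  hence "?L * (V n * P) \<le> 1" using Ppos by simp
  hence "V n * P \<le> 1 / ?L" using lp by (simp add: field_simps)
  thus ?thesis using PP by simp
qed

lemma lam_lower:
  assumes lp: "lambda0 a b c > 0"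
  shows "delta a b c \<le> ennreal (1 / lambda0 a b c)"
  unfolding delta_alt
proof (rule SUP_least)
  fix n
  have "ennreal (V n) * (\<Sum>k. ennreal (1 / w (k + n))) = (SUP M. ennreal (V n) * (\<Sum>k<M. ennreal (1 / w (k + n))))"
    by (simp add: suminf_eq_SUP SUP_mult_left_ennreal)
  also have "\<dots> \<le> ennreal (1 / lambda0 a b c)"
  proof (rule SUP_least)
    fix M
    have "ennreal (V n) * (\<Sum>k<M. ennreal (1 / w (k + n))) = ennreal (V n * (\<Sum>k<M. 1 / w (k + n)))"
      using V_pos[of n] w_pos by (subst ennreal_mult) (auto intro!: sum_nonneg simp: sum_ennreal less_imp_le)
    also have "\<dots> \<le> ennreal (1 / lambda0 a b c)"
      using partial_bound[OF lp] by (simp add: ennreal_leI)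
    finally show "ennreal (V n) * (\<Sum>k<M. ennreal (1 / w (k + n))) \<le> ennreal (1 / lambda0 a b c)" .
  qed
  finally show "ennreal (V n) * (\<Sum>k. ennreal (1 / w (k + n))) \<le> ennreal (1 / lambda0 a b c)" .
qed

lemma lam_upper:
  assumes fin: "delta a b c < \<infinity>"
  shows "enn2real (delta a b c) > 0 \<and> lambda0 a b c \<ge> 1 / (4 * enn2real (delta a b c))"
proof -
  define B where "B = enn2real (delta a b c)"
  have dB: "delta a b c = ennreal B" using fin by (simp add: B_def ennreal_enn2real_if)
  have trm: "ennreal (V n) * (\<Sum>k. ennreal (1 / w (k + n))) \<le> delta a b c" for n
    unfolding delta_alt by (rule SUP_upper) simp
  have sm: "summable (\<lambda>k. 1 / w (k + n))" for n
  proof (rule summable_suminf_not_top)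
    show "0 \<le> 1 / w (k + n)" for k using w_pos[of "k+n"] by simp
    show "(\<Sum>k. ennreal (1 / w (k + n))) \<noteq> top"
    proof
      assume "(\<Sum>k. ennreal (1 / w (k + n))) = top"
      then have "ennreal (V n) * (\<Sum>k. ennreal (1 / w (k + n))) = top"
        using V_pos[of n] by (simp add: ennreal_mult_eq_top_iff)
      then show False using trm[of n] fin by (simp add: top_unique)
    qed
  qed
  have VW: "V n * (\<Sum>k. 1 / w (k + n)) \<le> B" for n
  proof -
    have "(\<Sum>k. ennreal (1 / w (k + n))) = ennreal (\<Sum>k. 1 / w (k + n))"
      using w_pos by (intro suminf_ennreal2 sm) (simp add: less_imp_le)
    moreover have "0 \<le> (\<Sum>k. 1 / w (k + n))"
      using w_pos by (intro suminf_nonneg sm) (simp add: less_imp_le)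
    ultimately have "ennreal (V n * (\<Sum>k. 1 / w (k + n))) \<le> ennreal B"
      using trm[of n] V_pos[of n] unfolding dB by (subst ennreal_mult) (auto simp: less_imp_le)
    thus ?thesis using B_def enn2real_nonneg[of "delta a b c"] by (simp add: ennreal_le_iff2) linarith
  qed
  have summ: "summable (\<lambda>k. 1 / w k)" using sm[of 0] by simp
  have Wpos: "(\<Sum>k. 1 / w (k + 0)) > 0" using sm[of 0] w_pos by (intro suminf_pos) auto
  have Bpos: "B > 0" using VW[of 0] V_pos[of 0] Wpos by (meson mult_pos_pos order_less_le_trans)
  have "lambda0 a b c \<ge> 1 / (4 * B)"
    unfolding lam_def
  proof (rule cInf_greatest[OF LS_ne])
    fix x assume "x \<in> LS"
    then obtain f where f: "x = E f" "finite {k. f k \<noteq> 0}" "Nm f = 1" by (auto simp: LS_iff)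
    obtain N where N: "\<And>k. k \<ge> N \<Longrightarrow> f k = 0" using fin_bound[OF f(2)] by blast
    define g where "g k = f k / hh a b c k" for k
    have gN: "g N = 0" using N by (simp add: g_def)
    have nu: "0 < mu a b k * (hh a b c k)^2" for k using mu_pos[of k] h_pos[of k] by simp
    have H: "(\<Sum>k<N. (mu a b k * (hh a b c k)^2) * (g k)^2) \<le> 4 * B * (\<Sum>k<N. w k * (g (Suc k) - g k)^2)"
      by (rule hardy[where \<nu>="\<lambda>k. mu a b k * (hh a b c k)^2"])
        (use nu w_pos summ VW gN in \<open>auto simp: V_def\<close>)
    have "(\<Sum>k<N. (mu a b k * (hh a b c k)^2) * (g k)^2) = Nm f"
      using Nm_fin[of N f] N h_pos by (simp add: g_def power_divide less_imp_neq[symmetric])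
    moreover have "(\<Sum>k<N. w k * (g (Suc k) - g k)^2) = E f"
      using E_fin[of N f] N by (simp add: g_def)
    ultimately have "1 \<le> 4 * B * x" using H f by simp
    thus "1 / (4 * B) \<le> x" using Bpos by (simp add: divide_le_eq mult.commute)
  qed
  thus ?thesis using Bpos B_def by simp
qed

end

theorem theorem2p6:
  fixes a b c :: "nat \<Rightarrow> real"
  assumes "\<And>i. b i > 0"
    and "\<And>i. i \<ge> 1 \<Longrightarrow> a i > 0"
    and "\<And>i. c i \<le> 0"
  shows "delta a b c \<le> inverse (ennreal (lambda0 a b c))
       \<and> inverse (ennreal (lambda0 a b c)) \<le> 4 * delta a b c
       \<and> (lambda0 a b c > 0 \<longleftrightarrow> delta a b c < \<infinity>)"
proof -
  interpret bdp a b c using assms by unfold_locales auto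
  let ?L = "lambda0 a b c"
  have L0: "?L \<ge> 0" by (rule lam_nonneg)
  have i: "delta a b c \<le> inverse (ennreal ?L)"
  proof (cases "?L > 0")
    case True
    then show ?thesis using lam_lower[OF True] by (simp add: inverse_ennreal divide_inverse)
  next
    case False
    then have "?L = 0" using L0 by simp
    then show ?thesis by simp
  qed
  have ii: "inverse (ennreal ?L) \<le> 4 * delta a b c"
  proof (cases "delta a b c < \<infinity>")
    case False
    then have "delta a b c = \<infinity>" by (simp add: not_less top_unique)
    then show ?thesis by simp
  next
    case True
    define B where "B = enn2real (delta a b c)"
    have dB: "delta a b c = ennreal B" using True by (simp add: B_def ennreal_enn2real_if)
    from lam_upper[OF True] have Bp: "B > 0" and LB: "?L \<ge> 1 / (4 * B)" by (auto simp: B_def)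
    have "1 / (4 * B) > 0" using Bp by simp
    hence Lp: "?L > 0" using LB by linarith
    have "1 / ?L \<le> 4 * B" using LB Lp Bp by (simp add: field_simps)
    hence "ennreal (1 / ?L) \<le> ennreal (4 * B)" by (rule ennreal_leI)
    thus ?thesis using Lp Bp unfolding dB by (simp add: inverse_ennreal divide_inverse ennreal_mult)
  qed
  have iii: "?L > 0 \<longleftrightarrow> delta a b c < \<infinity>"
  proof
    assume "?L > 0"
    then have d: "delta a b c \<le> ennreal (1 / ?L)" by (rule lam_lower)
    have "ennreal (1 / ?L) < \<infinity>" by simp
    thus "delta a b c < \<infinity>" using d by (rule le_less_trans[rotated])
  next
    assume T: "delta a b c < \<infinity>"
    from lam_upper[OF T] have B0: "enn2real (delta a b c) > 0"
      and LB: "?L \<ge> 1 / (4 * enn2real (delta a b c))" by auto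
    have "1 / (4 * enn2real (delta a b c)) > 0" using B0 by simp
    thus "?L > 0" using LB by linarith
  qed
  show ?thesis using i ii iii by blast
qed
end
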